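(* Consider a financial network with $n$ institutions and $m$ underlying assets with prices $\vec p=(p_1,\dots,p_m)\ge 0$, asset-holding matrix $D=(D_{ik})$ and cross-holding matrix $C=(C_{ij})$ as described in the context. If the cross-holding graph has no directed cycles, then for every institution $i$ the equity valuation satisfies $V_i\le \|\vec p\|_1$.
   Context: Model: there are $n$ financial institutions and $m$ underlying assets; asset $k$ has price $p_k\ge 0$. $D_{ik}\ge 0$ is the fraction of asset $k$ owned by institution $i$ (so $\sum_i D_{ik}\le 1$ for each $k$). $C=(C_{ij})$ is an $n\times n$ nonnegative matrix, $C_{ij}$ being the fraction of institution $j$ owned by institution $i$, with $C_{ii}=0$. The self-holding of institution $j$ is $\hat C_{jj}=1-\sum_i C_{ij}$, assumed to satisfy $\hat C_{jj}>0$; $\hat C$ is the diagonal matrix with these entries. The equity valuation is the vector $\vec V$ solving $\vec V=D\vec p+C\vec V$, i.e. $\vec V=(I-C)^{-1}D\vec p$, and the market valuation is $\vec v=\hat C\vec V=\hat C(I-C)^{-1}D\vec p$. The cross-holding graph is the directed graph on the institutions with an edge from $j$ to $i$ whenever $C_{ij}>0$. *)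

theory Defs
  imports "HOL-Analysis.Analysis"
begin

definition cross_holding_graph :: "real^'n^'n \<Rightarrow> ('n \<times> 'n) set" where
  "cross_holding_graph C = {(j, i). C $ i $ j > 0}"

definition self_holding :: "real^'n^'n \<Rightarrow> 'n \<Rightarrow> real" where
  "self_holding C j = 1 - (\<Sum>i\<in>UNIV. C $ i $ j)"

end

theory Submission
  imports Defs
begin

theorem lemma1:
  fixes C :: "real^'n^'n" and D :: "real^'m^'n" and p :: "real^'m" and V :: "real^'n"
  assumes p_nonneg: "\<And>k. p $ k \<ge> 0"
    and D_nonneg: "\<And>i k. D $ i $ k \<ge> 0"
    and D_col: "\<And>k. (\<Sum>i\<in>UNIV. D $ i $ k) \<le> 1"
    and C_nonneg: "\<And>i j. C $ i $ j \<ge> 0"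
    and C_diag: "\<And>i. C $ i $ i = 0"
    and self_pos: "\<And>j. self_holding C j > 0"
    and acyc: "acyclic (cross_holding_graph C)"
    and V_eq: "V = D *v p + C *v V"
  shows "\<forall>i. V $ i \<le> (\<Sum>k\<in>UNIV. \<bar>p $ k\<bar>)"
proof
  fix i0
  let ?G = "cross_holding_graph C"
  have Vi: "\<And>i. V $ i = (\<Sum>k\<in>UNIV. D $ i $ k * p $ k) + (\<Sum>j\<in>UNIV. C $ i $ j * V $ j)"
    proof -
    fix i
    have "V $ i = (D *v p + C *v V) $ i" using V_eq by (rule arg_cong)
    then show "V $ i = (\<Sum>k\<in>UNIV. D $ i $ k * p $ k) + (\<Sum>j\<in>UNIV. C $ i $ j * V $ j)"
      by (simp only: vector_add_component matrix_vector_mult_def vec_lambda_beta)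
  qed
  have Dp0: "\<And>i. (\<Sum>k\<in>UNIV. D $ i $ k * p $ k) \<ge> 0"
    by (intro sum_nonneg) (simp add: D_nonneg p_nonneg)
  have wf: "wf ?G" using acyc by (intro finite_acyclic_wf) auto
  have Vnn: "\<And>i. V $ i \<ge> 0"
  proof -
    fix i show "V $ i \<ge> 0"
      using wf
    proof (induction i rule: wf_induct_rule)
      case (less i)
      have "(\<Sum>j\<in>UNIV. C $ i $ j * V $ j) \<ge> 0"
      proof (intro sum_nonneg)
        fix j
        show "C $ i $ j * V $ j \<ge> 0"
        proof (cases "C $ i $ j > 0")
          case True
          then have "(j, i) \<in> ?G" by (simp add: cross_holding_graph_def)
          then show ?thesis using less True by simp
        next
          case False
          then have "C $ i $ j = 0" using C_nonneg[of i j] by linarith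
          then show ?thesis by simp
        qed
      qed
      then show ?case using Vi[of i] Dp0[of i] by linarith
    qed
  qed
  define S where "S = {j. (j, i0) \<in> ?G\<^sup>*}"
  have i0S: "i0 \<in> S" by (simp add: S_def)
  have closed: "\<And>i j. i \<in> S \<Longrightarrow> j \<notin> S \<Longrightarrow> C $ i $ j = 0"
  proof -
    fix i j assume "i \<in> S" "j \<notin> S"
    show "C $ i $ j = 0"
    proof (rule ccontr)
      assume "C $ i $ j \<noteq> 0"
      then have "C $ i $ j > 0" using C_nonneg[of i j] by linarith
      then have "(j, i) \<in> ?G" by (simp add: cross_holding_graph_def)
      then have "(j, i0) \<in> ?G\<^sup>*" using \<open>i \<in> S\<close> S_def by auto
      then show False using \<open>j \<notin> S\<close> S_def by auto
    qed
  qed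
  have maxi: "\<And>k. k \<in> S \<Longrightarrow> C $ k $ i0 = 0"
  proof -
    fix k assume "k \<in> S"
    show "C $ k $ i0 = 0"
    proof (rule ccontr)
      assume "C $ k $ i0 \<noteq> 0"
      then have "C $ k $ i0 > 0" using C_nonneg[of k i0] by linarith
      then have "(i0, k) \<in> ?G" by (simp add: cross_holding_graph_def)
      moreover have "(k, i0) \<in> ?G\<^sup>*" using \<open>k \<in> S\<close> S_def by auto
      ultimately have "(i0, i0) \<in> ?G\<^sup>+" by auto
      then show False using acyc by (simp add: acyclic_def)
    qed
  qed
  define coef where "coef j = 1 - (\<Sum>k\<in>S. C $ k $ j)" for j
  have sumC: "\<And>i. i \<in> S \<Longrightarrow> (\<Sum>j\<in>UNIV. C $ i $ j * V $ j) = (\<Sum>j\<in>S. C $ i $ j * V $ j)"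
    by (rule sum.mono_neutral_right) (auto simp: closed)
  have "(\<Sum>i\<in>S. V $ i) = (\<Sum>i\<in>S. (\<Sum>k\<in>UNIV. D $ i $ k * p $ k)) + (\<Sum>i\<in>S. \<Sum>j\<in>S. C $ i $ j * V $ j)"
  proof -
    have "(\<Sum>i\<in>S. V $ i) = (\<Sum>i\<in>S. (\<Sum>k\<in>UNIV. D $ i $ k * p $ k) + (\<Sum>j\<in>S. C $ i $ j * V $ j))"
      by (rule sum.cong) (auto simp: sumC[symmetric] intro: Vi)
    then show ?thesis by (simp only: sum.distrib)
  qed
  also have "(\<Sum>i\<in>S. \<Sum>j\<in>S. C $ i $ j * V $ j) = (\<Sum>j\<in>S. (\<Sum>k\<in>S. C $ k $ j) * V $ j)"
    by (subst sum.swap) (simp add: sum_distrib_right)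
  finally have F: "(\<Sum>j\<in>S. coef j * V $ j) = (\<Sum>i\<in>S. (\<Sum>k\<in>UNIV. D $ i $ k * p $ k))"
    by (simp add: coef_def left_diff_distrib sum_subtractf)
  have coef_nn: "\<And>j. coef j \<ge> 0"
  proof -
    fix j
    have "(\<Sum>k\<in>S. C $ k $ j) \<le> (\<Sum>k\<in>UNIV. C $ k $ j)"
      by (rule sum_mono2) (auto simp: C_nonneg)
    then show "coef j \<ge> 0" using self_pos[of j] by (simp add: coef_def self_holding_def)
  qed
  have c0: "coef i0 = 1" by (simp add: coef_def maxi)
  have "V $ i0 = coef i0 * V $ i0" by (simp add: c0)
  also have "\<dots> \<le> (\<Sum>j\<in>S. coef j * V $ j)"
    using i0S by (intro member_le_sum) (auto simp: coef_nn Vnn)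
  also have "\<dots> \<le> (\<Sum>i\<in>UNIV. (\<Sum>k\<in>UNIV. D $ i $ k * p $ k))"
    unfolding F by (rule sum_mono2) (auto simp: Dp0)
  also have "\<dots> = (\<Sum>k\<in>UNIV. (\<Sum>i\<in>UNIV. D $ i $ k) * p $ k)"
    by (subst sum.swap) (simp add: sum_distrib_right)
  also have "\<dots> \<le> (\<Sum>k\<in>UNIV. \<bar>p $ k\<bar>)"
  proof (rule sum_mono)
    fix k
    have "(\<Sum>i\<in>UNIV. D $ i $ k) * p $ k \<le> 1 * p $ k"
      by (rule mult_right_mono) (auto simp: D_col p_nonneg)
    then show "(\<Sum>i\<in>UNIV. D $ i $ k) * p $ k \<le> \<bar>p $ k\<bar>" by simp
  qed
  finally show "V $ i0 \<le> (\<Sum>k\<in>UNIV. \<bar>p $ k\<bar>)" .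
qed

end
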